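(* For $\rho\ge0,\eta\ge0$ let $$\mathcal{G}_{\mathsf{sec}}(\rho,\eta)=\Big\{p:\ \sup_{\|v\|_2=1,\ r\in\mathbb{F}(p,\eta,\,x\mapsto|v^\top x|^2)}\big|\mathbb{E}_p[|v^\top X|^2]-\mathbb{E}_r[|v^\top X|^2]\big|\le\rho\Big\}.$$ Then for any $\epsilon$ with $2\epsilon\le\eta$, $$\sup_{p_1,p_2\in\mathcal{G}_{\mathsf{sec}}(\rho,\eta):\ W_1(p_1,p_2)\le2\epsilon}\|\mathbb{E}_{p_1}[XX^\top]-\mathbb{E}_{p_2}[XX^\top]\|_2\le2\rho.$$
   Context: Distributions are on $\mathbb{R}^d$ with finite second moments. $W_1(p,q)=\inf_{\pi\in\Pi(p,q)}\int\|x-y\|_2\,d\pi(x,y)$. Friendly perturbation: $r\in\mathbb{F}(p,\eta,f)$ means there is a coupling $\pi_{X,Y}$ of $X\sim p$ and $Y\sim r$ with $\mathbb{E}_\pi\|X-Y\|_2\le\eta$ such that $f(Y)$ lies between $f(X)$ and $\mathbb{E}_r[f(Y)]$ almost surely. $\|\cdot\|_2$ on matrices is the operator norm. *)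

theory Defs
  imports "HOL-Probability.Probability"
begin

definition is_dist2 :: "(real^'n) measure \<Rightarrow> bool" where
  "is_dist2 p \<longleftrightarrow> prob_space p \<and> sets p = sets borel \<and>
     integrable p (\<lambda>x. norm x ^ 2)"

definition coupling :: "((real^'n) \<times> (real^'n)) measure \<Rightarrow> (real^'n) measure \<Rightarrow> (real^'n) measure \<Rightarrow> bool" where
  "coupling \<pi> p q \<longleftrightarrow> prob_space \<pi> \<and> sets \<pi> = sets borel \<and>
     distr \<pi> borel fst = p \<and> distr \<pi> borel snd = q"

definition W1 :: "(real^'n) measure \<Rightarrow> (real^'n) measure \<Rightarrow> ennreal" where
  "W1 p q = (INF \<pi> \<in> {\<pi>. coupling \<pi> p q}. \<integral>\<^sup>+ z. ennreal (norm (fst z - snd z)) \<partial>\<pi>)"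

definition friendly :: "(real^'n) measure \<Rightarrow> real \<Rightarrow> (real^'n \<Rightarrow> real) \<Rightarrow> (real^'n) measure set" where
  "friendly p \<eta> f = {r. is_dist2 r \<and> (\<exists>\<pi>. coupling \<pi> p r \<and>
      (\<integral>\<^sup>+ z. ennreal (norm (fst z - snd z)) \<partial>\<pi>) \<le> ennreal \<eta> \<and>
      (AE z in \<pi>. min (f (fst z)) (\<integral>y. f y \<partial>r) \<le> f (snd z) \<and>
                  f (snd z) \<le> max (f (fst z)) (\<integral>y. f y \<partial>r)))}"

text \<open>G_sec(rho, eta); the sup bound is written as a bound on every element of the set.\<close>
definition G_sec :: "real \<Rightarrow> real \<Rightarrow> (real^'n) measure set" where
  "G_sec \<rho> \<eta> = {p. is_dist2 p \<and>
     (\<forall>v::real^'n. \<forall>r. norm v = 1 \<longrightarrow> r \<in> friendly p \<eta> (\<lambda>x. \<bar>v \<bullet> x\<bar>^2) \<longrightarrow>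
        \<bar>(\<integral>x. \<bar>v \<bullet> x\<bar>^2 \<partial>p) - (\<integral>x. \<bar>v \<bullet> x\<bar>^2 \<partial>r)\<bar> \<le> \<rho>)}"

definition second_moment :: "(real^'n) measure \<Rightarrow> real^'n^'n" where
  "second_moment p = (\<chi> i j. \<integral>x. x$i * x$j \<partial>p)"

end

theory Submission
  imports Defs
begin



lemma pm1: "\<bar>min a (max l b) - min a (max l' b)\<bar> \<le> \<bar>l - l'\<bar>" for a b l l' :: real
  by (simp add: min_def max_def abs_if)

lemma pm2: "\<bar>max b (min h a) - max b (min h' a)\<bar> \<le> \<bar>h - h'\<bar>" for a b h h' :: real
  by (simp add: min_def max_def abs_if)

lemma sqdiff: "\<bar>x^2 - y^2\<bar> = \<bar>x - y\<bar> * \<bar>x + y\<bar>" for x y :: real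
  by (simp add: power2_eq_square abs_mult[symmetric] algebra_simps)

lemma pm1sq: fixes a b l l' :: real assumes "0 \<le> a" "0 \<le> b"
  shows "\<bar>(min a (max l b))^2 - (min a (max l' b))^2\<bar> \<le> 2 * a * \<bar>l - l'\<bar>"
proof -
  have "\<bar>min a (max l b) + min a (max l' b)\<bar> \<le> 2 * a" using assms by (simp add: min_def max_def)
  hence "\<bar>min a (max l b) - min a (max l' b)\<bar> * \<bar>min a (max l b) + min a (max l' b)\<bar> \<le> \<bar>l - l'\<bar> * (2 * a)"
    by (intro mult_mono pm1) auto
  thus ?thesis by (simp add: sqdiff algebra_simps)
qed

lemma pm2sq: fixes a b h h' :: real assumes "0 \<le> a" "0 \<le> b"
  shows "\<bar>(max b (min h a))^2 - (max b (min h' a))^2\<bar> \<le> 2 * (a + b) * \<bar>h - h'\<bar>"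
proof -
  have "\<bar>max b (min h a) + max b (min h' a)\<bar> \<le> 2 * (a + b)" using assms by (simp add: min_def max_def)
  hence "\<bar>max b (min h a) - max b (min h' a)\<bar> * \<bar>max b (min h a) + max b (min h' a)\<bar> \<le> \<bar>h - h'\<bar> * (2 * (a + b))"
    by (intro mult_mono pm2) auto
  thus ?thesis by (simp add: sqdiff algebra_simps)
qed

lemma psum: "(a - min a (max k b)) + (max b (min k a) - b) = max 0 (a - b)" for a b k :: real
  by (simp add: min_def max_def)

lemma pord: "min a (max k b) \<le> max b (min k a)" for a b k :: real
  by (simp add: min_def max_def)

lemma pbtw1: fixes a b k' l :: real assumes "0 \<le> k'" "k' \<le> l"
  shows "(a \<le> min a (max l b) \<and> min a (max l b) \<le> k') \<or> (k' \<le> min a (max l b) \<and> min a (max l b) \<le> a)"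
  using assms by (auto simp: min_def max_def)

lemma pbtw2: fixes a b k' h :: real assumes "h \<le> k'"
  shows "(b \<le> max b (min h a) \<and> max b (min h a) \<le> k') \<or> (k' \<le> max b (min h a) \<and> max b (min h a) \<le> b)"
  using assms by (auto simp: min_def max_def)

lemma pmono1: fixes a b l l' :: real assumes "0 \<le> a" "0 \<le> b" "0 \<le> l" "l \<le> l'"
  shows "(min a (max l' b))^2 - l'^2 \<le> (min a (max l b))^2 - l^2"
  by (smt (verit) assms(3,4) power2_le_imp_le)

lemma pcase2: fixes a b h k :: real assumes "0 \<le> a" "0 \<le> b" "0 \<le> h" "h \<le> k"
  shows "(max b (min k a))^2 - (max b (min h a))^2 \<le> 2 * k * (max b (min k a) - max b (min h a))"
proof -
  let ?x = "max b (min k a)" and ?y = "max b (min h a)"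
  show ?thesis
  proof (cases "k \<le> b")
    case True
    hence "?x = b" "?y = b" using assms by (auto simp: min_def max_def)
    thus ?thesis by simp
  next
    case False
    hence "?x \<le> k" "?y \<le> ?x" "0 \<le> ?y" using assms by (auto simp: min_def max_def)
    hence "(?x - ?y) * (?x + ?y) \<le> (?x - ?y) * (2 * k)" by (intro mult_left_mono) auto
    thus ?thesis by (simp add: power2_eq_square algebra_simps)
  qed
qed

lemma pcase3: fixes a b k l :: real assumes "0 \<le> a" "0 \<le> b" "0 \<le> k" "k \<le> l"
  shows "(min a (max l b))^2 - (min a (max k b))^2 \<le> 2 * l * (min a (max l b) - min a (max k b))"
proof -
  let ?x = "min a (max l b)" and ?y = "min a (max k b)"
  show ?thesis
  proof (cases "l \<le> b")
    case True
    hence "?x = min a b" "?y = min a b" using assms by (auto simp: min_def max_def)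
    thus ?thesis by simp
  next
    case False
    hence "?x \<le> l" "?y \<le> ?x" "0 \<le> ?y" using assms by (auto simp: min_def max_def)
    hence "(?x - ?y) * (?x + ?y) \<le> (?x - ?y) * (2 * l)" by (intro mult_left_mono) auto
    thus ?thesis by (simp add: power2_eq_square algebra_simps)
  qed
qed

lemma ptail: fixes a b L :: real assumes "0 \<le> a" "0 < L"
  shows "a - min a (max L b) \<le> a^2 / L"
proof (cases "a \<le> L")
  case True
  hence "a - min a (max L b) = 0" by (simp add: min_def max_def)
  thus ?thesis using assms by simp
next
  case False
  hence "a - min a (max L b) \<le> a - L" by (simp add: min_def max_def)
  also have "\<dots> \<le> a" using assms by simp
  also have "a \<le> a^2 / L" using False assms by (simp add: power2_eq_square field_simps)
  finally show ?thesis .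
qed


lemma lip_int:
  fixes F :: "real \<Rightarrow> 'a \<Rightarrow> real"
  assumes iF: "\<And>l. integrable M (F l)" and iK: "integrable M K" and K0: "\<And>z. 0 \<le> K z"
    and b: "\<And>l l' z. \<bar>F l z - F l' z\<bar> \<le> K z * \<bar>l - l'\<bar>"
  shows "continuous_on U (\<lambda>l. \<integral>z. F l z \<partial>M)"
proof (rule lipschitz_on_continuous_on)
  show "(\<integral>z. K z \<partial>M)-lipschitz_on U (\<lambda>l. \<integral>z. F l z \<partial>M)"
  proof (rule lipschitz_onI)
    show "0 \<le> (\<integral>z. K z \<partial>M)" using K0 by (simp add: Bochner_Integration.integral_nonneg)
    fix l l' :: real
    have "dist (\<integral>z. F l z \<partial>M) (\<integral>z. F l' z \<partial>M) = \<bar>\<integral>z. F l z - F l' z \<partial>M\<bar>"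
      using iF by (simp add: dist_real_def Bochner_Integration.integral_diff)
    also have "\<dots> \<le> (\<integral>z. \<bar>F l z - F l' z\<bar> \<partial>M)"
      using integral_norm_bound[of M "\<lambda>z. F l z - F l' z"] by simp
    also have "\<dots> \<le> (\<integral>z. K z * \<bar>l - l'\<bar> \<partial>M)"
      using iF iK b by (intro integral_mono) auto
    also have "\<dots> = (\<integral>z. K z \<partial>M) * dist l l'" by (simp add: dist_real_def)
    finally show "dist (\<integral>z. F l z \<partial>M) (\<integral>z. F l' z \<partial>M) \<le> (\<integral>z. K z \<partial>M) * dist l l'" .
  qed
qed


lemma btw_sq:
  fixes a b k :: real
  assumes "0 \<le> a" "0 \<le> b" "0 \<le> k" "(a \<le> b \<and> b \<le> k) \<or> (k \<le> b \<and> b \<le> a)"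
  shows "(a^2 \<le> b^2 \<and> b^2 \<le> k^2) \<or> (k^2 \<le> b^2 \<and> b^2 \<le> a^2)"
  using assms by (auto intro: power_mono)

lemma FR:
  fixes \<pi> :: "((real^'n) \<times> (real^'n)) measure" and g :: "(real^'n) \<times> (real^'n) \<Rightarrow> real^'n"
    and m :: "(real^'n) \<times> (real^'n) \<Rightarrow> real" and v :: "real^'n"
  assumes pG: "p \<in> G_sec \<rho> \<eta>"
    and v: "norm v = 1"
    and pi: "prob_space \<pi>" "sets \<pi> = sets borel"
    and g: "g \<in> borel_measurable borel" "distr \<pi> borel g = p"
    and mm: "m \<in> borel_measurable borel" "\<And>z. 0 \<le> m z"
    and mi: "integrable \<pi> (\<lambda>z. (m z)^2)"
    and kap: "0 \<le> \<kappa>" "(\<integral>z. (m z)^2 \<partial>\<pi>) = \<kappa>^2"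
    and btw: "\<And>z. (\<bar>v \<bullet> g z\<bar> \<le> m z \<and> m z \<le> \<kappa>) \<or> (\<kappa> \<le> m z \<and> m z \<le> \<bar>v \<bullet> g z\<bar>)"
    and cost: "(\<integral>\<^sup>+z. ennreal \<bar>m z - \<bar>v \<bullet> g z\<bar>\<bar> \<partial>\<pi>) \<le> ennreal \<eta>"
  shows "\<bar>(\<integral>x. \<bar>v \<bullet> x\<bar>^2 \<partial>p) - \<kappa>^2\<bar> \<le> \<rho>"
proof -
  have MC: "\<And>N. measurable \<pi> N = measurable borel N" by (rule measurable_cong_sets[OF pi(2) refl])
  define s where "s z = (if 0 \<le> v \<bullet> g z then 1 else (-1::real))" for z
  define Y where "Y z = g z + (s z * m z - v \<bullet> g z) *\<^sub>R v" for z
  have vv: "v \<bullet> v = 1" using v by (simp add: power2_norm_eq_inner[symmetric])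
  have vY: "v \<bullet> Y z = s z * m z" for z by (simp add: Y_def inner_add_right vv)
  have FY: "\<bar>v \<bullet> Y z\<bar>^2 = (m z)^2" for z by (simp add: vY s_def power2_eq_square)
  have FY': "(v \<bullet> Y z)^2 = (m z)^2" for z using FY[of z] by simp
  have nGY: "norm (g z - Y z) = \<bar>m z - \<bar>v \<bullet> g z\<bar>\<bar>" for z
    using mm(2)[of z] by (simp add: Y_def s_def v abs_minus_commute) (auto simp: abs_if)
  have sm: "s \<in> borel_measurable borel" unfolding s_def using g(1) by measurable
  have Ym: "Y \<in> borel_measurable borel" unfolding Y_def using g(1) sm mm(1) by measurable
  have Ypi: "Y \<in> measurable \<pi> borel" using Ym by (simp only: MC)
  have gpi: "g \<in> measurable \<pi> borel" using g(1) by (simp only: MC)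
  have PYm: "(\<lambda>z. (g z, Y z)) \<in> measurable \<pi> borel"
    using measurable_Pair[OF gpi Ypi] by (simp add: borel_prod)
  have fm: "fst \<in> borel_measurable (borel :: ((real^'n)\<times>(real^'n)) measure)"
    using measurable_fst[of "borel :: (real^'n) measure" "borel :: (real^'n) measure"] by (simp add: borel_prod)
  have sm2: "snd \<in> borel_measurable (borel :: ((real^'n)\<times>(real^'n)) measure)"
    using measurable_snd[of "borel :: (real^'n) measure" "borel :: (real^'n) measure"] by (simp add: borel_prod)
  define r where "r = distr \<pi> borel Y"
  define \<pi>' where "\<pi>' = distr \<pi> borel (\<lambda>z. (g z, Y z))"
  have pd: "is_dist2 p" using pG by (simp add: G_sec_def)
  have ig: "integrable \<pi> (\<lambda>z. norm (g z) ^ 2)"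
    using pd g(2)[symmetric] gpi by (simp add: is_dist2_def integrable_distr_eq)
  have wle: "\<bar>v \<bullet> g z\<bar> \<le> norm (g z)" for z
    using Cauchy_Schwarz_ineq2[of v "g z"] v by simp
  have Ybound: "norm (Y z) ^ 2 \<le> 6 * norm (g z) ^ 2 + 4 * (m z)^2" for z
  proof -
    have "norm (Y z) \<le> norm (g z) + \<bar>m z - \<bar>v \<bullet> g z\<bar>\<bar>"
      using norm_triangle_ineq4[of "g z" "g z - Y z"] nGY[of z] by simp
    also have "\<dots> \<le> 2 * norm (g z) + m z" using wle[of z] mm(2)[of z] by (auto simp: abs_if)
    finally have "norm (Y z) \<le> 2 * norm (g z) + m z" .
    hence "norm (Y z) ^ 2 \<le> (2 * norm (g z) + m z)^2"
      by (intro power_mono) auto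
    also have "\<dots> \<le> 6 * norm (g z) ^ 2 + 4 * (m z)^2"
    proof -
      have e: "6 * norm (g z) ^ 2 + 4 * (m z)^2 - (2 * norm (g z) + m z)^2 = 2 * (norm (g z) - m z)^2 + (m z)^2"
        by (simp add: power2_eq_square algebra_simps)
      have "0 \<le> 2 * (norm (g z) - m z)^2 + (m z)^2" by simp
      thus ?thesis using e by linarith
    qed
    finally show ?thesis .
  qed
  have iY: "integrable \<pi> (\<lambda>z. norm (Y z) ^ 2)"
  proof (rule Bochner_Integration.integrable_bound)
    show "integrable \<pi> (\<lambda>z. 6 * norm (g z) ^ 2 + 4 * (m z)^2)" using ig mi by simp
    show "(\<lambda>z. norm (Y z) ^ 2) \<in> borel_measurable \<pi>" using Ypi by measurable
    show "AE z in \<pi>. norm (norm (Y z) ^ 2) \<le> norm (6 * norm (g z) ^ 2 + 4 * (m z)^2)"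
    proof (rule AE_I2)
      fix z
      have "0 \<le> 6 * norm (g z) ^ 2 + 4 * (m z)^2" by simp
      thus "norm (norm (Y z) ^ 2) \<le> norm (6 * norm (g z) ^ 2 + 4 * (m z)^2)"
        using Ybound[of z] by simp
    qed
  qed
  have rd: "is_dist2 r" unfolding is_dist2_def r_def
    using prob_space.prob_space_distr[OF pi(1) Ypi] iY Ypi by (simp add: integrable_distr_eq)
  have cp: "coupling \<pi>' p r" unfolding coupling_def \<pi>'_def r_def
    using prob_space.prob_space_distr[OF pi(1) PYm] PYm g(2)
      distr_distr[OF fm PYm] distr_distr[OF sm2 PYm]
    by (simp add: comp_def)
  have Er: "(\<integral>y. \<bar>v \<bullet> y\<bar>^2 \<partial>r) = \<kappa>^2"
    unfolding r_def using Ypi by (simp add: integral_distr FY' kap(2))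
  have costp: "(\<integral>\<^sup>+z. ennreal (norm (fst z - snd z)) \<partial>\<pi>') \<le> ennreal \<eta>"
  proof -
    have mi2: "(\<lambda>z. ennreal (norm (fst z - snd z))) \<in> borel_measurable (borel :: ((real^'n)\<times>(real^'n)) measure)"
      using fm sm2 by measurable
    have "(\<integral>\<^sup>+z. ennreal (norm (fst z - snd z)) \<partial>\<pi>') = (\<integral>\<^sup>+z. ennreal \<bar>m z - \<bar>v \<bullet> g z\<bar>\<bar> \<partial>\<pi>)"
      unfolding \<pi>'_def using nn_integral_distr[OF PYm] mi2 by (simp add: nGY)
    thus ?thesis using cost by simp
  qed
  have AEp: "AE z in \<pi>'. min (\<bar>v \<bullet> fst z\<bar>^2) (\<integral>y. \<bar>v \<bullet> y\<bar>^2 \<partial>r) \<le> \<bar>v \<bullet> snd z\<bar>^2 \<and>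
                  \<bar>v \<bullet> snd z\<bar>^2 \<le> max (\<bar>v \<bullet> fst z\<bar>^2) (\<integral>y. \<bar>v \<bullet> y\<bar>^2 \<partial>r)"
    unfolding \<pi>'_def Er
  proof (subst AE_distr_iff[OF PYm])
    show "{x \<in> space borel. min (\<bar>v \<bullet> fst x\<bar>^2) (\<kappa>^2) \<le> \<bar>v \<bullet> snd x\<bar>^2 \<and>
                  \<bar>v \<bullet> snd x\<bar>^2 \<le> max (\<bar>v \<bullet> fst x\<bar>^2) (\<kappa>^2)} \<in> sets borel"
    proof -
      have h1: "(\<lambda>x. \<bar>v \<bullet> fst x\<bar>^2) \<in> borel_measurable (borel :: ((real^'n)\<times>(real^'n)) measure)"
        using fm by measurable
      have h2: "(\<lambda>x. \<bar>v \<bullet> snd x\<bar>^2) \<in> borel_measurable (borel :: ((real^'n)\<times>(real^'n)) measure)"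
        using sm2 by measurable
      show ?thesis using h1 h2 by measurable
    qed
    show "AE z in \<pi>. min (\<bar>v \<bullet> fst (g z, Y z)\<bar>^2) (\<kappa>^2) \<le> \<bar>v \<bullet> snd (g z, Y z)\<bar>^2 \<and>
                  \<bar>v \<bullet> snd (g z, Y z)\<bar>^2 \<le> max (\<bar>v \<bullet> fst (g z, Y z)\<bar>^2) (\<kappa>^2)"
    proof (rule AE_I2)
      fix z
      have a: "0 \<le> \<bar>v \<bullet> g z\<bar>" by simp
      have "(\<bar>v \<bullet> g z\<bar>^2 \<le> (m z)^2 \<and> (m z)^2 \<le> \<kappa>^2) \<or> (\<kappa>^2 \<le> (m z)^2 \<and> (m z)^2 \<le> \<bar>v \<bullet> g z\<bar>^2)"
        by (rule btw_sq[OF a mm(2)[of z] kap(1) btw[of z]])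
      thus "min (\<bar>v \<bullet> fst (g z, Y z)\<bar>^2) (\<kappa>^2) \<le> \<bar>v \<bullet> snd (g z, Y z)\<bar>^2 \<and>
                  \<bar>v \<bullet> snd (g z, Y z)\<bar>^2 \<le> max (\<bar>v \<bullet> fst (g z, Y z)\<bar>^2) (\<kappa>^2)"
        using FY[of z] by auto
    qed
  qed
  have "r \<in> friendly p \<eta> (\<lambda>x. \<bar>v \<bullet> x\<bar>^2)"
    unfolding friendly_def using rd cp costp AEp by blast
  hence "\<bar>(\<integral>x. \<bar>v \<bullet> x\<bar>^2 \<partial>p) - (\<integral>x. \<bar>v \<bullet> x\<bar>^2 \<partial>r)\<bar> \<le> \<rho>"
    using pG v by (simp add: G_sec_def)
  thus ?thesis using Er by simp
qed



lemma sym_inner_mat: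
  fixes M :: "real^'n^'n"
  assumes "transpose M = M"
  shows "y \<bullet> (M *v x) = x \<bullet> (M *v y)"
proof -
  have "y \<bullet> (M *v x) = (y v* M) \<bullet> x" by (simp add: dot_lmul_matrix)
  also have "y v* M = transpose M *v y" by (simp add: transpose_matrix_vector)
  also have "\<dots> = M *v y" using assms by simp
  finally show ?thesis by (simp add: inner_commute)
qed

lemma sym_onorm:
  fixes M :: "real^'n^'n"
  assumes sym: "transpose M = M"
    and b: "\<And>v. norm v = 1 \<Longrightarrow> \<bar>v \<bullet> (M *v v)\<bar> \<le> c"
  shows "onorm (\<lambda>x. M *v x) \<le> c"
proof (rule onorm_le)
  have q: "\<bar>z \<bullet> (M *v z)\<bar> \<le> c * (norm z)^2" for z
  proof (cases "z = 0")
    case True then show ?thesis by simp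
  next
    case False
    hence nz: "norm z > 0" by simp
    define u where "u = (1 / norm z) *\<^sub>R z"
    have "norm u = 1" using nz by (simp add: u_def)
    hence "\<bar>u \<bullet> (M *v u)\<bar> \<le> c" by (rule b)
    moreover have "u \<bullet> (M *v u) = (z \<bullet> (M *v z)) / (norm z)^2"
      by (simp add: u_def matrix_vector_mult_scaleR power2_eq_square)
    ultimately show ?thesis using nz by (simp add: abs_div divide_le_eq mult.commute)
  qed
  have polar: "4 * (y \<bullet> (M *v x)) = (x + y) \<bullet> (M *v (x + y)) - (x - y) \<bullet> (M *v (x - y))" for x y
    using sym_inner_mat[OF sym, of y x]
    by (simp add: matrix_vector_right_distrib matrix_vector_mult_diff_distrib inner_add_left inner_add_right
        inner_diff_left inner_diff_right)
  have par: "(norm (x + y))^2 + (norm (x - y))^2 = 2 * (norm x)^2 + 2 * (norm y)^2" for x y :: "real^'n"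
    by (simp add: power2_norm_eq_inner inner_add_left inner_add_right inner_diff_left inner_diff_right inner_commute)
  have key: "y \<bullet> (M *v x) \<le> c * ((norm x)^2 + (norm y)^2) / 2" for x y
  proof -
    have "4 * (y \<bullet> (M *v x)) \<le> c * (norm (x + y))^2 + c * (norm (x - y))^2"
      using polar[of y x] q[of "x+y"] q[of "x-y"] by (simp add: abs_le_iff) 
    also have "\<dots> = c * ((norm (x + y))^2 + (norm (x - y))^2)" by (simp add: algebra_simps)
    also have "\<dots> = c * (2 * (norm x)^2 + 2 * (norm y)^2)" using par[of x y] by simp
    finally show ?thesis by (simp add: algebra_simps)
  qed
  fix x :: "real^'n"
  show "norm (M *v x) \<le> c * norm x"
  proof (cases "M *v x = 0")
    case True
    obtain v :: "real^'n" where "norm v = 1" using vector_choose_size[of 1] by auto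
    hence "0 \<le> c" using b[of v] by linarith
    thus ?thesis using True by simp
  next
    case False
    define a where "a = norm x" 
    define bb where "bb = norm (M *v x)"
    have bpos: "bb > 0" using False by (simp add: bb_def)
    define y where "y = (a / bb) *\<^sub>R (M *v x)"
    have ny: "norm y = a" using bpos by (simp add: y_def bb_def a_def)
    have "y \<bullet> (M *v x) = a * bb" using bpos
      by (simp add: y_def bb_def power2_norm_eq_inner[symmetric] power2_eq_square)
    moreover have "y \<bullet> (M *v x) \<le> c * ((norm x)^2 + (norm y)^2) / 2" by (rule key)
    ultimately have "a * bb \<le> c * (a^2 + a^2) / 2" using ny a_def by metis
    hence "a * bb \<le> a * (c * a)" by (simp add: power2_eq_square algebra_simps)
    moreover have "a > 0" using False a_def by auto
    ultimately show ?thesis by (simp add: a_def bb_def)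
  qed
qed


lemma integrable_comp_prod:
  fixes p :: "(real^'n) measure"
  assumes "is_dist2 p"
  shows "integrable p (\<lambda>x. x$i * x$j)"
proof -
  have ip: "integrable p (\<lambda>x. norm x ^ 2)" using assms by (simp add: is_dist2_def)
  have sb: "sets p = sets borel" using assms by (simp add: is_dist2_def)
  show ?thesis
  proof (rule Bochner_Integration.integrable_bound[OF ip])
    show "(\<lambda>x. x$i * x$j) \<in> borel_measurable p" using sb measurable_cong_sets[OF sb refl] by simp
    show "AE x in p. norm (x$i * x$j) \<le> norm (norm x ^ 2)"
    proof (rule AE_I2)
      fix x :: "real^'n"
      have "\<bar>x$i\<bar> * \<bar>x$j\<bar> \<le> norm x * norm x"
        by (intro mult_mono component_le_norm_cart) auto
      thus "norm (x$i * x$j) \<le> norm (norm x ^ 2)" by (simp add: abs_mult power2_eq_square)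
    qed
  qed
qed

lemma quad_second_moment:
  fixes p :: "(real^'n) measure"
  assumes "is_dist2 p"
  shows "v \<bullet> (second_moment p *v v) = (\<integral>x. \<bar>v \<bullet> x\<bar>^2 \<partial>p)"
proof -
  have "v \<bullet> (second_moment p *v v) = (\<Sum>i\<in>UNIV. v$i * (\<Sum>j\<in>UNIV. (\<integral>x. x$i * x$j \<partial>p) * v$j))"
    unfolding inner_vec_def matrix_vector_mult_def second_moment_def by simp
  also have "\<dots> = (\<Sum>i\<in>UNIV. \<Sum>j\<in>UNIV. (\<integral>x. x$i * x$j \<partial>p) * (v$i * v$j))"
    by (simp add: sum_distrib_left algebra_simps)
  also have "\<dots> = (\<Sum>i\<in>UNIV. \<Sum>j\<in>UNIV. (\<integral>x. v$i * (x$i * x$j) * v$j \<partial>p))"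
    by (simp only: integral_mult_left_zero[symmetric]) (simp only: algebra_simps)
  also have "\<dots> = (\<integral>x. (\<Sum>i\<in>UNIV. \<Sum>j\<in>UNIV. v$i * (x$i * x$j) * v$j) \<partial>p)"
    using integrable_comp_prod[OF assms]
    by (simp add: Bochner_Integration.integral_sum Bochner_Integration.integrable_sum)
  also have "\<dots> = (\<integral>x. \<bar>v \<bullet> x\<bar>^2 \<partial>p)"
  proof (rule Bochner_Integration.integral_cong[OF refl])
    fix x :: "real^'n"
    have "\<bar>v \<bullet> x\<bar>^2 = (\<Sum>i\<in>UNIV. v$i * x$i) * (\<Sum>j\<in>UNIV. v$j * x$j)"
      by (simp add: inner_vec_def power2_eq_square)
    also have "\<dots> = (\<Sum>i\<in>UNIV. \<Sum>j\<in>UNIV. v$i * (x$i * x$j) * v$j)"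
      by (simp add: sum_product algebra_simps)
    finally show "(\<Sum>i\<in>UNIV. \<Sum>j\<in>UNIV. v$i * (x$i * x$j) * v$j) = \<bar>v \<bullet> x\<bar>^2" by simp
  qed
  finally show ?thesis .
qed

lemma transpose_sm_diff: "transpose (second_moment p1 - second_moment p2) = second_moment p1 - second_moment p2"
  unfolding transpose_def second_moment_def by (simp add: vec_eq_iff mult.commute)




lemma core:
  fixes \<pi> :: "((real^'n) \<times> (real^'n)) measure" and g1 g2 :: "(real^'n) \<times> (real^'n) \<Rightarrow> real^'n"
    and v :: "real^'n"
  assumes p1G: "p1 \<in> G_sec \<rho> \<eta>" and p2G: "p2 \<in> G_sec \<rho> \<eta>"
    and v: "norm v = 1"
    and pi: "prob_space \<pi>" "sets \<pi> = sets borel"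
    and g1: "g1 \<in> borel_measurable borel" "distr \<pi> borel g1 = p1"
    and g2: "g2 \<in> borel_measurable borel" "distr \<pi> borel g2 = p2"
    and cst: "(\<integral>\<^sup>+z. ennreal (norm (g1 z - g2 z)) \<partial>\<pi>) \<le> ennreal (\<eta> + \<delta>)"
    and dl: "0 < \<delta>" "\<delta> \<le> \<eta>"
  shows "(\<integral>x. \<bar>v \<bullet> x\<bar>^2 \<partial>p1) - (\<integral>x. \<bar>v \<bullet> x\<bar>^2 \<partial>p2)
           \<le> 2 * \<rho> + 2 * ((\<integral>x. \<bar>v \<bullet> x\<bar>^2 \<partial>p1) / \<eta> + (\<integral>x. \<bar>v \<bullet> x\<bar>^2 \<partial>p1) + 2) * \<delta>"
proof -
  have MC: "\<And>N. measurable \<pi> N = measurable borel N" by (rule measurable_cong_sets[OF pi(2) refl])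
  have fin: "finite_measure \<pi>" using pi(1) by (simp add: prob_space_def)
  have g1pi: "g1 \<in> measurable \<pi> borel" using g1(1) by (simp only: MC)
  have g2pi: "g2 \<in> measurable \<pi> borel" using g2(1) by (simp only: MC)
  define w1 where "w1 z = \<bar>v \<bullet> g1 z\<bar>" for z
  define w2 where "w2 z = \<bar>v \<bullet> g2 z\<bar>" for z
  have w1m: "w1 \<in> borel_measurable borel" unfolding w1_def using g1(1) by measurable
  have w2m: "w2 \<in> borel_measurable borel" unfolding w2_def using g2(1) by measurable
  have w1p: "w1 \<in> borel_measurable \<pi>" using w1m by (simp only: MC)
  have w2p: "w2 \<in> borel_measurable \<pi>" using w2m by (simp only: MC)
  have w10: "0 \<le> w1 z" for z by (simp add: w1_def)
  have w20: "0 \<le> w2 z" for z by (simp add: w2_def)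
  have pd1: "is_dist2 p1" using p1G by (simp add: G_sec_def)
  have pd2: "is_dist2 p2" using p2G by (simp add: G_sec_def)
  have ig1: "integrable \<pi> (\<lambda>z. norm (g1 z) ^ 2)"
    using pd1 g1(2)[symmetric] g1pi by (simp add: is_dist2_def integrable_distr_eq)
  have ig2: "integrable \<pi> (\<lambda>z. norm (g2 z) ^ 2)"
    using pd2 g2(2)[symmetric] g2pi by (simp add: is_dist2_def integrable_distr_eq)
  have wle1: "w1 z \<le> norm (g1 z)" for z
    using Cauchy_Schwarz_ineq2[of v "g1 z"] v by (simp add: w1_def)
  have wle2: "w2 z \<le> norm (g2 z)" for z
    using Cauchy_Schwarz_ineq2[of v "g2 z"] v by (simp add: w2_def)
  have iw1s: "integrable \<pi> (\<lambda>z. (w1 z)^2)"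
  proof (rule Bochner_Integration.integrable_bound[OF ig1])
    show "(\<lambda>z. (w1 z)^2) \<in> borel_measurable \<pi>" using w1p by measurable
    show "AE z in \<pi>. norm ((w1 z)^2) \<le> norm (norm (g1 z) ^ 2)"
      using wle1 w10 by (intro AE_I2) (simp add: power_mono)
  qed
  have iw2s: "integrable \<pi> (\<lambda>z. (w2 z)^2)"
  proof (rule Bochner_Integration.integrable_bound[OF ig2])
    show "(\<lambda>z. (w2 z)^2) \<in> borel_measurable \<pi>" using w2p by measurable
    show "AE z in \<pi>. norm ((w2 z)^2) \<le> norm (norm (g2 z) ^ 2)"
      using wle2 w20 by (intro AE_I2) (simp add: power_mono)
  qed
  have sqb: "x \<le> 1 + x^2" for x :: real
  proof -
    have "0 \<le> (x - 1/2)^2 + 3/4" by (intro add_nonneg_nonneg) auto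
    thus ?thesis by (simp add: power2_eq_square algebra_simps)
  qed
  have iw1: "integrable \<pi> w1"
  proof (rule Bochner_Integration.integrable_bound)
    show "integrable \<pi> (\<lambda>z. 1 + (w1 z)^2)"
      by (rule Bochner_Integration.integrable_add[OF finite_measure.integrable_const[OF fin] iw1s])
    show "w1 \<in> borel_measurable \<pi>" by (rule w1p)
    show "AE z in \<pi>. norm (w1 z) \<le> norm (1 + (w1 z)^2)"
      using w10 sqb by (intro AE_I2) simp
  qed
  have iw2: "integrable \<pi> w2"
  proof (rule Bochner_Integration.integrable_bound)
    show "integrable \<pi> (\<lambda>z. 1 + (w2 z)^2)"
      by (rule Bochner_Integration.integrable_add[OF finite_measure.integrable_const[OF fin] iw2s])
    show "w2 \<in> borel_measurable \<pi>" by (rule w2p)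
    show "AE z in \<pi>. norm (w2 z) \<le> norm (1 + (w2 z)^2)"
      using w20 sqb by (intro AE_I2) simp
  qed
  define A1 where "A1 = (\<integral>z. (w1 z)^2 \<partial>\<pi>)"
  define A2 where "A2 = (\<integral>z. (w2 z)^2 \<partial>\<pi>)"
  have sqm: "(\<lambda>x::real^'n. \<bar>v \<bullet> x\<bar>^2) \<in> borel_measurable borel" by measurable
  have A1e: "(\<integral>x. \<bar>v \<bullet> x\<bar>^2 \<partial>p1) = A1"
    unfolding A1_def w1_def g1(2)[symmetric] using integral_distr[OF g1pi sqm] by simp
  have A2e: "(\<integral>x. \<bar>v \<bullet> x\<bar>^2 \<partial>p2) = A2"
    unfolding A2_def w2_def g2(2)[symmetric] using integral_distr[OF g2pi sqm] by simp
  have A10: "0 \<le> A1" unfolding A1_def by (simp add: Bochner_Integration.integral_nonneg)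

  define m1 where "m1 l z = min (w1 z) (max l (w2 z))" for l z
  define m2 where "m2 h z = max (w2 z) (min h (w1 z))" for h z
  have m1m: "m1 l \<in> borel_measurable borel" for l unfolding m1_def using w1m w2m by measurable
  have m2m: "m2 h \<in> borel_measurable borel" for h unfolding m2_def using w1m w2m by measurable
  have m1p: "m1 l \<in> borel_measurable \<pi>" for l using m1m by (simp only: MC)
  have m2p: "m2 h \<in> borel_measurable \<pi>" for h using m2m by (simp only: MC)
  have m10: "0 \<le> m1 l z" for l z using w10[of z] w20[of z] by (simp add: m1_def)
  have m1le: "m1 l z \<le> w1 z" for l z by (simp add: m1_def)
  have m2ge: "w2 z \<le> m2 h z" for h z by (simp add: m2_def)
  have m20: "0 \<le> m2 h z" for h z using w20[of z] m2ge[of z h] by linarith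
  have m2le: "m2 h z \<le> w1 z + w2 z" for h z using w10[of z] w20[of z] by (simp add: m2_def)
  have im1s: "integrable \<pi> (\<lambda>z. (m1 l z)^2)" for l
  proof (rule Bochner_Integration.integrable_bound[OF iw1s])
    show "(\<lambda>z. (m1 l z)^2) \<in> borel_measurable \<pi>" using m1p by measurable
    show "AE z in \<pi>. norm ((m1 l z)^2) \<le> norm ((w1 z)^2)"
      using m10 m1le by (intro AE_I2) (simp add: power_mono)
  qed
  have im1: "integrable \<pi> (m1 l)" for l
  proof (rule Bochner_Integration.integrable_bound[OF iw1])
    show "m1 l \<in> borel_measurable \<pi>" by (rule m1p)
    show "AE z in \<pi>. norm (m1 l z) \<le> norm (w1 z)"
      using m10 m1le w10 by (intro AE_I2) simp
  qed
  have im2s: "integrable \<pi> (\<lambda>z. (m2 h z)^2)" for h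
  proof (rule Bochner_Integration.integrable_bound)
    show "integrable \<pi> (\<lambda>z. 2 * (w1 z)^2 + 2 * (w2 z)^2)" using iw1s iw2s by simp
    show "(\<lambda>z. (m2 h z)^2) \<in> borel_measurable \<pi>" using m2p by measurable
    show "AE z in \<pi>. norm ((m2 h z)^2) \<le> norm (2 * (w1 z)^2 + 2 * (w2 z)^2)"
    proof (rule AE_I2)
      fix z
      have "(m2 h z)^2 \<le> (w1 z + w2 z)^2" using m20 m2le by (simp add: power_mono)
      also have "\<dots> \<le> 2 * (w1 z)^2 + 2 * (w2 z)^2"
      proof -
        have "0 \<le> (w1 z - w2 z)^2" by simp
        thus ?thesis by (simp add: power2_eq_square algebra_simps)
      qed
      finally show "norm ((m2 h z)^2) \<le> norm (2 * (w1 z)^2 + 2 * (w2 z)^2)" by simp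
    qed
  qed
  have im2: "integrable \<pi> (m2 h)" for h
  proof (rule Bochner_Integration.integrable_bound)
    show "integrable \<pi> (\<lambda>z. w1 z + w2 z)" using iw1 iw2 by simp
    show "m2 h \<in> borel_measurable \<pi>" by (rule m2p)
    show "AE z in \<pi>. norm (m2 h z) \<le> norm (w1 z + w2 z)"
      using m20 m2le w10 w20 by (intro AE_I2) simp
  qed
  define \<Phi>1 where "\<Phi>1 l = (\<integral>z. (m1 l z)^2 \<partial>\<pi>)" for l
  define \<Phi>2 where "\<Phi>2 h = (\<integral>z. (m2 h z)^2 \<partial>\<pi>)" for h
  define c1 where "c1 l = (\<integral>z. w1 z - m1 l z \<partial>\<pi>)" for l
  define c2 where "c2 h = (\<integral>z. m2 h z - w2 z \<partial>\<pi>)" for h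
  define P where "P = (\<integral>z. max 0 (w1 z - w2 z) \<partial>\<pi>)"
  have c1nn: "0 \<le> c1 l" for l unfolding c1_def using m1le
    by (intro Bochner_Integration.integral_nonneg) (simp add: algebra_simps)
  have c2nn: "0 \<le> c2 h" for h unfolding c2_def using m2ge
    by (intro Bochner_Integration.integral_nonneg) (simp add: algebra_simps)
  have \<Phi>10: "0 \<le> \<Phi>1 l" for l unfolding \<Phi>1_def by (simp add: Bochner_Integration.integral_nonneg)
  have \<Phi>20: "0 \<le> \<Phi>2 h" for h unfolding \<Phi>2_def by (simp add: Bochner_Integration.integral_nonneg)
  have \<Phi>1le: "\<Phi>1 l \<le> A1" for l unfolding \<Phi>1_def A1_def
    using im1s iw1s m10 m1le by (intro integral_mono) (auto intro: power_mono)
  have \<Phi>12: "\<Phi>1 k \<le> \<Phi>2 k" for k unfolding \<Phi>1_def \<Phi>2_def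
    using im1s im2s m10 pord by (intro integral_mono) (auto intro: power_mono simp: m1_def m2_def)
  have csum: "c1 k + c2 k = P" for k
  proof -
    have "c1 k + c2 k = (\<integral>z. (w1 z - m1 k z) + (m2 k z - w2 z) \<partial>\<pi>)"
      unfolding c1_def c2_def using iw1 iw2 im1 im2 by (simp add: Bochner_Integration.integral_add)
    also have "\<dots> = P" unfolding P_def m1_def m2_def by (simp only: psum)
    finally show ?thesis .
  qed
  have Ple: "P \<le> \<eta> + \<delta>"
  proof -
    have iP: "integrable \<pi> (\<lambda>z. max 0 (w1 z - w2 z))"
    proof (rule Bochner_Integration.integrable_bound[OF iw1])
      show "(\<lambda>z. max 0 (w1 z - w2 z)) \<in> borel_measurable \<pi>" using w1p w2p by measurable
      show "AE z in \<pi>. norm (max 0 (w1 z - w2 z)) \<le> norm (w1 z)" using w10 w20 by (intro AE_I2) simp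
    qed
    have pw: "max 0 (w1 z - w2 z) \<le> norm (g1 z - g2 z)" for z
    proof -
      have "w1 z - w2 z \<le> \<bar>v \<bullet> (g1 z - g2 z)\<bar>" unfolding w1_def w2_def inner_diff_right by simp
      also have "\<dots> \<le> norm (g1 z - g2 z)" using Cauchy_Schwarz_ineq2[of v "g1 z - g2 z"] v by simp
      finally show ?thesis by simp
    qed
    have "ennreal P = (\<integral>\<^sup>+z. ennreal (max 0 (w1 z - w2 z)) \<partial>\<pi>)"
      unfolding P_def using nn_integral_eq_integral[OF iP] by simp
    also have "\<dots> \<le> (\<integral>\<^sup>+z. ennreal (norm (g1 z - g2 z)) \<partial>\<pi>)"
      using pw by (intro nn_integral_mono) (simp add: ennreal_leI)
    also have "\<dots> \<le> ennreal (\<eta> + \<delta>)" by (rule cst)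
    finally have "ennreal P \<le> ennreal (\<eta> + \<delta>)" .
    moreover have "0 \<le> \<eta> + \<delta>" using dl by simp
    ultimately show ?thesis using ennreal_le_iff by blast
  qed
  have cont\<Phi>1: "continuous_on UNIV \<Phi>1" unfolding \<Phi>1_def
    using im1s iw1 w10 by (intro lip_int[where K="\<lambda>z. 2 * w1 z"]) (auto simp: m1_def intro: pm1sq w10 w20)
  have cont\<Phi>2: "continuous_on UNIV \<Phi>2" unfolding \<Phi>2_def
  proof (rule lip_int[where K="\<lambda>z. 2 * (w1 z + w2 z)"])
    show "integrable \<pi> (\<lambda>z. 2 * (w1 z + w2 z))" using iw1 iw2 by simp
    show "0 \<le> 2 * (w1 z + w2 z)" for z using w10[of z] w20[of z] by simp
    show "\<bar>(m2 l z)^2 - (m2 l' z)^2\<bar> \<le> 2 * (w1 z + w2 z) * \<bar>l - l'\<bar>" for l l' z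
      unfolding m2_def by (rule pm2sq[OF w10 w20])
  qed (rule im2s)
  have contc1: "continuous_on UNIV c1" unfolding c1_def
  proof (rule lip_int[where K="\<lambda>z. 1"])
    show "integrable \<pi> (\<lambda>z. w1 z - m1 l z)" for l using iw1 im1 by simp
    show "integrable \<pi> (\<lambda>z. 1::real)" by (rule finite_measure.integrable_const[OF fin])
    show "\<bar>(w1 z - m1 l z) - (w1 z - m1 l' z)\<bar> \<le> 1 * \<bar>l - l'\<bar>" for l l' z
      using pm1[of "w1 z" l' "w2 z" l] unfolding m1_def by (simp add: abs_minus_commute)
  qed simp
  have contc2: "continuous_on UNIV c2" unfolding c2_def
  proof (rule lip_int[where K="\<lambda>z. 1"])
    show "integrable \<pi> (\<lambda>z. m2 l z - w2 z)" for l using iw2 im2 by simp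
    show "integrable \<pi> (\<lambda>z. 1::real)" by (rule finite_measure.integrable_const[OF fin])
    show "\<bar>(m2 l z - w2 z) - (m2 l' z - w2 z)\<bar> \<le> 1 * \<bar>l - l'\<bar>" for l l' z
      using pm2[of "w2 z" l "w1 z" l'] unfolding m2_def by simp
  qed simp

  have FR1: "A1 - \<Phi>1 l \<le> \<rho>" if l0: "0 \<le> l" and Hl: "\<Phi>1 l \<le> l^2" and cl: "c1 l \<le> \<eta>" for l
  proof -
    define \<kappa> where "\<kappa> = sqrt (\<Phi>1 l)"
    have \<kappa>0: "0 \<le> \<kappa>" unfolding \<kappa>_def using \<Phi>10 by simp
    have \<kappa>2: "(\<integral>z. (m1 l z)^2 \<partial>\<pi>) = \<kappa>^2" unfolding \<kappa>_def using \<Phi>10[of l] by (simp add: \<Phi>1_def)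
    have \<kappa>l: "\<kappa> \<le> l" unfolding \<kappa>_def using l0 Hl by (simp add: real_le_lsqrt)
    have btw: "(\<bar>v \<bullet> g1 z\<bar> \<le> m1 l z \<and> m1 l z \<le> \<kappa>) \<or> (\<kappa> \<le> m1 l z \<and> m1 l z \<le> \<bar>v \<bullet> g1 z\<bar>)" for z
      using pbtw1[OF \<kappa>0 \<kappa>l, of "w1 z" "w2 z"] by (simp add: m1_def w1_def)
    have "(\<integral>\<^sup>+z. ennreal \<bar>m1 l z - \<bar>v \<bullet> g1 z\<bar>\<bar> \<partial>\<pi>) = (\<integral>\<^sup>+z. ennreal (w1 z - m1 l z) \<partial>\<pi>)"
    proof (intro nn_integral_cong)
      fix z
      have "\<bar>m1 l z - \<bar>v \<bullet> g1 z\<bar>\<bar> = w1 z - m1 l z" using m1le[of l z] by (simp add: w1_def[symmetric])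
      thus "ennreal \<bar>m1 l z - \<bar>v \<bullet> g1 z\<bar>\<bar> = ennreal (w1 z - m1 l z)" by simp
    qed
    also have "\<dots> = ennreal (c1 l)" unfolding c1_def
      using iw1 im1 m1le by (intro nn_integral_eq_integral) (auto simp: algebra_simps)
    also have "\<dots> \<le> ennreal \<eta>" using cl by (simp add: ennreal_leI)
    finally have cost: "(\<integral>\<^sup>+z. ennreal \<bar>m1 l z - \<bar>v \<bullet> g1 z\<bar>\<bar> \<partial>\<pi>) \<le> ennreal \<eta>" .
    have "\<bar>(\<integral>x. \<bar>v \<bullet> x\<bar>^2 \<partial>p1) - \<kappa>^2\<bar> \<le> \<rho>"
      by (rule FR[OF p1G v pi g1 m1m m10 im1s \<kappa>0 \<kappa>2 btw cost])
    thus ?thesis using A1e \<kappa>2 unfolding \<Phi>1_def by simp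
  qed
  have FR2: "\<Phi>2 h - A2 \<le> \<rho>" if h0: "0 \<le> h" and Hh: "h^2 \<le> \<Phi>2 h" and ch: "c2 h \<le> \<eta>" for h
  proof -
    define \<kappa> where "\<kappa> = sqrt (\<Phi>2 h)"
    have \<kappa>0: "0 \<le> \<kappa>" unfolding \<kappa>_def using \<Phi>20 by simp
    have \<kappa>2: "(\<integral>z. (m2 h z)^2 \<partial>\<pi>) = \<kappa>^2" unfolding \<kappa>_def using \<Phi>20[of h] by (simp add: \<Phi>2_def)
    have \<kappa>h: "h \<le> \<kappa>" unfolding \<kappa>_def using h0 Hh by (simp add: real_le_rsqrt)
    have btw: "(\<bar>v \<bullet> g2 z\<bar> \<le> m2 h z \<and> m2 h z \<le> \<kappa>) \<or> (\<kappa> \<le> m2 h z \<and> m2 h z \<le> \<bar>v \<bullet> g2 z\<bar>)" for z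
      using pbtw2[OF \<kappa>h, of "w2 z" "w1 z"] by (simp add: m2_def w2_def)
    have "(\<integral>\<^sup>+z. ennreal \<bar>m2 h z - \<bar>v \<bullet> g2 z\<bar>\<bar> \<partial>\<pi>) = (\<integral>\<^sup>+z. ennreal (m2 h z - w2 z) \<partial>\<pi>)"
    proof (intro nn_integral_cong)
      fix z
      have "\<bar>m2 h z - \<bar>v \<bullet> g2 z\<bar>\<bar> = m2 h z - w2 z" using m2ge[of z h] by (simp add: w2_def[symmetric])
      thus "ennreal \<bar>m2 h z - \<bar>v \<bullet> g2 z\<bar>\<bar> = ennreal (m2 h z - w2 z)" by simp
    qed
    also have "\<dots> = ennreal (c2 h)" unfolding c2_def
      using iw2 im2 m2ge by (intro nn_integral_eq_integral) (auto simp: algebra_simps)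
    also have "\<dots> \<le> ennreal \<eta>" using ch by (simp add: ennreal_leI)
    finally have cost: "(\<integral>\<^sup>+z. ennreal \<bar>m2 h z - \<bar>v \<bullet> g2 z\<bar>\<bar> \<partial>\<pi>) \<le> ennreal \<eta>" .
    have "\<bar>(\<integral>x. \<bar>v \<bullet> x\<bar>^2 \<partial>p2) - \<kappa>^2\<bar> \<le> \<rho>"
      by (rule FR[OF p2G v pi g2 m2m m20 im2s \<kappa>0 \<kappa>2 btw cost])
    thus ?thesis using A2e \<kappa>2 unfolding \<Phi>2_def by simp
  qed

  have meas1: "measure \<pi> (space \<pi>) = 1" using prob_space.prob_space[OF pi(1)] by simp
  have contH1: "continuous_on UNIV (\<lambda>l. \<Phi>1 l - l^2)"
    by (intro continuous_on_diff cont\<Phi>1 continuous_intros)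
  define S where "S = {l::real. 0 \<le> l \<and> \<Phi>1 l - l^2 \<le> 0}"
  have Sc: "closed S"
  proof -
    have "S = {l::real. 0 \<le> l} \<inter> {l. \<Phi>1 l - l^2 \<le> 0}" by (auto simp: S_def)
    moreover have "closed {l::real. 0 \<le> l}"
      by (rule closed_Collect_le) (intro continuous_intros)+
    moreover have "closed {l. \<Phi>1 l - l^2 \<le> 0}"
      by (rule closed_Collect_le[OF contH1]) (intro continuous_intros)
    ultimately show ?thesis by auto
  qed
  have A1S: "A1 + 1 \<in> S"
  proof -
    have "A1 \<le> (A1 + 1)^2" using A10 by (simp add: power2_eq_square algebra_simps)
    thus ?thesis using \<Phi>1le[of "A1 + 1"] A10 by (simp add: S_def)
  qed
  have Sbdd: "bdd_below S" unfolding S_def by (rule bdd_belowI[of _ 0]) auto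
  define \<alpha> where "\<alpha> = Inf S"
  have \<alpha>S: "\<alpha> \<in> S" unfolding \<alpha>_def using A1S Sbdd Sc by (intro closed_contains_Inf) auto
  have \<alpha>0: "0 \<le> \<alpha>" and H\<alpha>: "\<Phi>1 \<alpha> \<le> \<alpha>^2" using \<alpha>S by (auto simp: S_def)
  have \<alpha>le: "\<alpha> \<le> A1 + 1" unfolding \<alpha>_def using A1S Sbdd by (rule cInf_lower)
  have below: "\<Phi>1 l - l^2 > 0" if "0 \<le> l" "l < \<alpha>" for l
  proof (rule ccontr)
    assume "\<not> \<Phi>1 l - l^2 > 0"
    hence "l \<in> S" using that by (auto simp: S_def)
    hence "\<alpha> \<le> l" unfolding \<alpha>_def using Sbdd by (rule cInf_lower)
    thus False using that by simp
  qed
  have H2\<alpha>: "\<alpha>^2 \<le> \<Phi>2 \<alpha>"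
  proof (cases "\<alpha> = 0")
    case True thus ?thesis using \<Phi>20 by simp
  next
    case False
    hence ap: "0 < \<alpha>" using \<alpha>0 by simp
    have "\<exists>x\<ge>0. x \<le> \<alpha> \<and> \<Phi>1 x - x^2 = 0"
      using below[of 0] ap H\<alpha> continuous_on_subset[OF contH1]
      by (intro IVT2') auto
    then obtain x where x: "0 \<le> x" "x \<le> \<alpha>" "\<Phi>1 x - x^2 = 0" by blast
    have "x \<in> S" using x by (simp add: S_def)
    hence "\<alpha> \<le> x" unfolding \<alpha>_def using Sbdd by (rule cInf_lower)
    hence "x = \<alpha>" using x by simp
    thus ?thesis using x \<Phi>12[of \<alpha>] by simp
  qed
  have H1mono: "\<Phi>1 l \<le> l^2" if "\<alpha> \<le> l" for l
  proof -
    have "(\<integral>z. (m1 l z)^2 - l^2 \<partial>\<pi>) \<le> (\<integral>z. (m1 \<alpha> z)^2 - \<alpha>^2 \<partial>\<pi>)"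
    proof (rule integral_mono)
      show "integrable \<pi> (\<lambda>z. (m1 l z)^2 - l^2)"
        by (rule Bochner_Integration.integrable_diff[OF im1s finite_measure.integrable_const[OF fin]])
      show "integrable \<pi> (\<lambda>z. (m1 \<alpha> z)^2 - \<alpha>^2)"
        by (rule Bochner_Integration.integrable_diff[OF im1s finite_measure.integrable_const[OF fin]])
      show "(m1 l z)^2 - l^2 \<le> (m1 \<alpha> z)^2 - \<alpha>^2" for z
        unfolding m1_def by (rule pmono1[OF w10 w20 \<alpha>0 that])
    qed
    moreover have "(\<integral>z. (m1 k z)^2 - k^2 \<partial>\<pi>) = \<Phi>1 k - k^2" for k
      unfolding \<Phi>1_def using meas1
      by (simp add: Bochner_Integration.integral_diff[OF im1s finite_measure.integrable_const[OF fin]])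
    ultimately have "\<Phi>1 l - l^2 \<le> \<Phi>1 \<alpha> - \<alpha>^2" by simp
    thus ?thesis using H\<alpha> by simp
  qed
  have c20: "c2 0 = 0"
  proof -
    have "m2 0 z = w2 z" for z using w10[of z] w20[of z] by (simp add: m2_def)
    thus ?thesis by (simp add: c2_def)
  qed
  have ce: "c2 k = (\<integral>z. m2 k z \<partial>\<pi>) - (\<integral>z. w2 z \<partial>\<pi>)" for k
    unfolding c2_def by (rule Bochner_Integration.integral_diff[OF im2 iw2])
  have ce1: "c1 k = (\<integral>z. w1 z \<partial>\<pi>) - (\<integral>z. m1 k z \<partial>\<pi>)" for k
    unfolding c1_def by (rule Bochner_Integration.integral_diff[OF iw1 im1])
  have A\<eta>: "0 \<le> A1 / \<eta>" using A10 dl by simp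
  have K0: "0 \<le> 2 * (A1 / \<eta> + A1 + 2) * \<delta>" using A10 dl by simp
  have main: "A1 - A2 \<le> 2 * \<rho> + 2 * (A1 / \<eta> + A1 + 2) * \<delta>"
  proof (cases "c1 \<alpha> \<le> \<eta> \<and> c2 \<alpha> \<le> \<eta>")
    case True
    have "A1 - \<Phi>1 \<alpha> \<le> \<rho>" using FR1[OF \<alpha>0 H\<alpha>] True by simp
    moreover have "\<Phi>2 \<alpha> - A2 \<le> \<rho>" using FR2[OF \<alpha>0 H2\<alpha>] True by simp
    ultimately show ?thesis using \<Phi>12[of \<alpha>] K0 by linarith
  next
    case False
    show ?thesis
    proof (cases "\<eta> < c2 \<alpha>")
      case True
      have "\<exists>x\<ge>0. x \<le> \<alpha> \<and> c2 x = \<eta>"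
        using c20 True dl \<alpha>0 continuous_on_subset[OF contc2]
        by (intro IVT') auto
      then obtain h where h: "0 \<le> h" "h \<le> \<alpha>" "c2 h = \<eta>" by blast
      have "h < \<alpha>" using h True by (cases "h = \<alpha>") auto
      hence "h^2 \<le> \<Phi>2 h" using below[OF h(1)] \<Phi>12[of h] by simp
      hence f2: "\<Phi>2 h - A2 \<le> \<rho>" using FR2[OF h(1)] h(3) by simp
      have "c1 \<alpha> \<le> \<delta>" using csum[of \<alpha>] Ple True by simp
      hence f1: "A1 - \<Phi>1 \<alpha> \<le> \<rho>" using FR1[OF \<alpha>0 H\<alpha>] dl by simp
      have "(\<integral>z. (m2 \<alpha> z)^2 - (m2 h z)^2 \<partial>\<pi>) \<le> (\<integral>z. 2 * \<alpha> * (m2 \<alpha> z - m2 h z) \<partial>\<pi>)"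
      proof (rule integral_mono)
        show "integrable \<pi> (\<lambda>z. (m2 \<alpha> z)^2 - (m2 h z)^2)"
          by (rule Bochner_Integration.integrable_diff[OF im2s im2s])
        show "integrable \<pi> (\<lambda>z. 2 * \<alpha> * (m2 \<alpha> z - m2 h z))"
          using Bochner_Integration.integrable_diff[OF im2 im2] by simp
        show "(m2 \<alpha> z)^2 - (m2 h z)^2 \<le> 2 * \<alpha> * (m2 \<alpha> z - m2 h z)" for z
          unfolding m2_def by (rule pcase2[OF w10 w20 h(1) h(2)])
      qed
      moreover have "(\<integral>z. (m2 \<alpha> z)^2 - (m2 h z)^2 \<partial>\<pi>) = \<Phi>2 \<alpha> - \<Phi>2 h"
        unfolding \<Phi>2_def by (rule Bochner_Integration.integral_diff[OF im2s im2s])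
      moreover have "(\<integral>z. 2 * \<alpha> * (m2 \<alpha> z - m2 h z) \<partial>\<pi>) = 2 * \<alpha> * (c2 \<alpha> - c2 h)"
        using Bochner_Integration.integral_diff[OF im2 im2, of \<alpha> h] ce[of \<alpha>] ce[of h] by simp
      ultimately have "\<Phi>2 \<alpha> - \<Phi>2 h \<le> 2 * \<alpha> * (c2 \<alpha> - c2 h)" by (cases "\<alpha> = 0") auto
      moreover have "c2 \<alpha> - c2 h \<le> \<delta>" using csum[of \<alpha>] c1nn[of \<alpha>] Ple h(3) by simp
      ultimately have "\<Phi>2 \<alpha> - \<Phi>2 h \<le> 2 * \<alpha> * \<delta>"
        using \<alpha>0 by (smt (verit) mult_left_mono)
      moreover have "2 * \<alpha> * \<delta> \<le> 2 * (A1 / \<eta> + A1 + 2) * \<delta>"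
      proof (rule mult_right_mono)
        show "2 * \<alpha> \<le> 2 * (A1 / \<eta> + A1 + 2)" using \<alpha>le A\<eta> by argo
      qed (use dl in simp)
      ultimately show ?thesis using f1 f2 \<Phi>12[of \<alpha>] by linarith
    next
      case c2F: False
      hence c1g: "\<eta> < c1 \<alpha>" using False by auto
      define L where "L = A1 / \<eta> + \<alpha> + 1"
      have Lpos: "0 < L" using A\<eta> \<alpha>0 unfolding L_def by argo
      have "c1 L \<le> (\<integral>z. (w1 z)^2 / L \<partial>\<pi>)" unfolding c1_def
      proof (rule integral_mono)
        show "integrable \<pi> (\<lambda>z. w1 z - m1 L z)" using iw1 im1 by simp
        show "integrable \<pi> (\<lambda>z. (w1 z)^2 / L)" using iw1s by simp
        show "w1 z - m1 L z \<le> (w1 z)^2 / L" for z unfolding m1_def by (rule ptail[OF w10 Lpos])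
      qed
      also have "\<dots> = A1 / L" by (simp add: A1_def)
      also have "\<dots> \<le> \<eta>"
      proof -
        have "A1 \<le> \<eta> * L" using dl \<alpha>0 by (simp add: L_def algebra_simps)
        thus ?thesis using Lpos by (simp add: divide_le_eq mult.commute)
      qed
      finally have cL: "c1 L \<le> \<eta>" .
      have "\<alpha> \<le> L" using A10 dl by (simp add: L_def)
      hence "\<exists>x\<ge>\<alpha>. x \<le> L \<and> c1 x = \<eta>"
        using cL c1g continuous_on_subset[OF contc1]
        by (intro IVT2') auto
      then obtain l where l: "\<alpha> \<le> l" "l \<le> L" "c1 l = \<eta>" by blast
      have l0: "0 \<le> l" using l \<alpha>0 by simp
      have f1: "A1 - \<Phi>1 l \<le> \<rho>" using FR1[OF l0 H1mono[OF l(1)]] l(3) by simp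
      have f2: "\<Phi>2 \<alpha> - A2 \<le> \<rho>" using FR2[OF \<alpha>0 H2\<alpha>] c2F by simp
      have "(\<integral>z. (m1 l z)^2 - (m1 \<alpha> z)^2 \<partial>\<pi>) \<le> (\<integral>z. 2 * l * (m1 l z - m1 \<alpha> z) \<partial>\<pi>)"
      proof (rule integral_mono)
        show "integrable \<pi> (\<lambda>z. (m1 l z)^2 - (m1 \<alpha> z)^2)"
          by (rule Bochner_Integration.integrable_diff[OF im1s im1s])
        show "integrable \<pi> (\<lambda>z. 2 * l * (m1 l z - m1 \<alpha> z))"
          using Bochner_Integration.integrable_diff[OF im1 im1] by simp
        show "(m1 l z)^2 - (m1 \<alpha> z)^2 \<le> 2 * l * (m1 l z - m1 \<alpha> z)" for z
          unfolding m1_def by (rule pcase3[OF w10 w20 \<alpha>0 l(1)])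
      qed
      moreover have "(\<integral>z. (m1 l z)^2 - (m1 \<alpha> z)^2 \<partial>\<pi>) = \<Phi>1 l - \<Phi>1 \<alpha>"
        unfolding \<Phi>1_def by (rule Bochner_Integration.integral_diff[OF im1s im1s])
      moreover have "(\<integral>z. 2 * l * (m1 l z - m1 \<alpha> z) \<partial>\<pi>) = 2 * l * (c1 \<alpha> - c1 l)"
        using Bochner_Integration.integral_diff[OF im1 im1, of l \<alpha>] ce1[of \<alpha>] ce1[of l] by simp
      ultimately have "\<Phi>1 l - \<Phi>1 \<alpha> \<le> 2 * l * (c1 \<alpha> - c1 l)" by (cases "l = 0") auto
      moreover have "c1 \<alpha> - c1 l \<le> \<delta>" using csum[of \<alpha>] c2nn[of \<alpha>] Ple l(3) by simp
      ultimately have "\<Phi>1 l - \<Phi>1 \<alpha> \<le> 2 * l * \<delta>"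
        using l0 by (smt (verit) mult_left_mono)
      moreover have "2 * l * \<delta> \<le> 2 * (A1 / \<eta> + A1 + 2) * \<delta>"
      proof (rule mult_right_mono)
        show "2 * l \<le> 2 * (A1 / \<eta> + A1 + 2)" using l(2) \<alpha>le A\<eta> unfolding L_def by argo
      qed (use dl in simp)
      ultimately show ?thesis using f1 f2 \<Phi>12[of \<alpha>] by linarith
    qed
  qed
  thus ?thesis using A1e A2e by simp
qed


lemma le_eps:
  fixes x y K \<eta> :: real
  assumes "0 < \<eta>" and h: "\<And>\<delta>. 0 < \<delta> \<Longrightarrow> \<delta> \<le> \<eta> \<Longrightarrow> x \<le> y + K * \<delta>"
  shows "x \<le> y"
proof (rule ccontr)
  assume "\<not> x \<le> y"
  hence d: "0 < x - y" by simp
  define \<delta> where "\<delta> = min \<eta> ((x - y) / (2 * (\<bar>K\<bar> + 1)))"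
  have \<delta>0: "0 < \<delta>" using assms(1) d by (simp add: \<delta>_def)
  have "K * \<delta> \<le> \<bar>K\<bar> * \<delta>" using \<delta>0 by (intro mult_right_mono) auto
  also have "\<dots> \<le> (\<bar>K\<bar> + 1) * ((x - y) / (2 * (\<bar>K\<bar> + 1)))"
    using assms(1) d by (intro mult_mono) (auto simp: \<delta>_def less_imp_le[OF \<delta>0])
  also have "\<dots> = (x - y) / 2" by (simp add: field_simps)
  finally have "K * \<delta> < x - y" using d by simp
  moreover have "x \<le> y + K * \<delta>" using h[OF \<delta>0] by (simp add: \<delta>_def)
  ultimately show False by simp
qed

lemma fst_borel: "fst \<in> borel_measurable (borel :: ((real^'n)\<times>(real^'n)) measure)"
  using measurable_fst[of "borel :: (real^'n) measure" "borel :: (real^'n) measure"] by (simp add: borel_prod)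
lemma snd_borel: "snd \<in> borel_measurable (borel :: ((real^'n)\<times>(real^'n)) measure)"
  using measurable_snd[of "borel :: (real^'n) measure" "borel :: (real^'n) measure"] by (simp add: borel_prod)

lemma coupling_exists:
  assumes "W1 p1 p2 \<le> ennreal \<eta>" "0 < \<delta>" "0 \<le> \<eta>"
  shows "\<exists>\<pi>. coupling \<pi> p1 p2 \<and> (\<integral>\<^sup>+ z. ennreal (norm (fst z - snd z)) \<partial>\<pi>) \<le> ennreal (\<eta> + \<delta>)"
proof -
  have "ennreal \<eta> < ennreal (\<eta> + \<delta>)" using assms by (simp add: ennreal_less_iff)
  hence "W1 p1 p2 < ennreal (\<eta> + \<delta>)" by (rule le_less_trans[OF assms(1)])
  then obtain \<pi> where "coupling \<pi> p1 p2" "(\<integral>\<^sup>+ z. ennreal (norm (fst z - snd z)) \<partial>\<pi>) < ennreal (\<eta> + \<delta>)"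
    unfolding W1_def by (auto simp: INF_less_iff)
  thus ?thesis by (auto intro: less_imp_le)
qed

lemma dir_pos:
  fixes v :: "real^'n"
  assumes p1G: "p1 \<in> G_sec \<rho> \<eta>" and p2G: "p2 \<in> G_sec \<rho> \<eta>" and v: "norm v = 1"
    and W: "W1 p1 p2 \<le> ennreal \<eta>" and \<eta>: "0 < \<eta>"
  shows "\<bar>(\<integral>x. \<bar>v \<bullet> x\<bar>^2 \<partial>p1) - (\<integral>x. \<bar>v \<bullet> x\<bar>^2 \<partial>p2)\<bar> \<le> 2 * \<rho>"
proof -
  define A1 where "A1 = (\<integral>x. \<bar>v \<bullet> x\<bar>^2 \<partial>p1)"
  define A2 where "A2 = (\<integral>x. \<bar>v \<bullet> x\<bar>^2 \<partial>p2)"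
  have a: "A1 - A2 \<le> 2 * \<rho>"
  proof (rule le_eps[OF \<eta>])
    fix \<delta> :: real assume d: "0 < \<delta>" "\<delta> \<le> \<eta>"
    obtain \<pi> where c: "coupling \<pi> p1 p2" and cs: "(\<integral>\<^sup>+ z. ennreal (norm (fst z - snd z)) \<partial>\<pi>) \<le> ennreal (\<eta> + \<delta>)"
      using coupling_exists[OF W d(1)] \<eta> by auto
    have cc: "prob_space \<pi>" "sets \<pi> = sets borel" "distr \<pi> borel fst = p1" "distr \<pi> borel snd = p2"
      using c by (auto simp: coupling_def)
    show "A1 - A2 \<le> 2 * \<rho> + (2 * (A1 / \<eta> + A1 + 2)) * \<delta>"
      using core[OF p1G p2G v cc(1,2) fst_borel cc(3) snd_borel cc(4) cs d] unfolding A1_def A2_def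
      by (simp add: mult.assoc)
  qed
  have b: "A2 - A1 \<le> 2 * \<rho>"
  proof (rule le_eps[OF \<eta>])
    fix \<delta> :: real assume d: "0 < \<delta>" "\<delta> \<le> \<eta>"
    obtain \<pi> where c: "coupling \<pi> p1 p2" and cs: "(\<integral>\<^sup>+ z. ennreal (norm (fst z - snd z)) \<partial>\<pi>) \<le> ennreal (\<eta> + \<delta>)"
      using coupling_exists[OF W d(1)] \<eta> by auto
    have cc: "prob_space \<pi>" "sets \<pi> = sets borel" "distr \<pi> borel fst = p1" "distr \<pi> borel snd = p2"
      using c by (auto simp: coupling_def)
    have cs': "(\<integral>\<^sup>+ z. ennreal (norm (snd z - fst z)) \<partial>\<pi>) \<le> ennreal (\<eta> + \<delta>)"
      using cs by (simp add: norm_minus_commute)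
    show "A2 - A1 \<le> 2 * \<rho> + (2 * (A2 / \<eta> + A2 + 2)) * \<delta>"
      using core[OF p2G p1G v cc(1,2) snd_borel cc(4) fst_borel cc(3) cs' d] unfolding A1_def A2_def
      by (simp add: mult.assoc)
  qed
  show ?thesis using a b unfolding A1_def A2_def by linarith
qed


lemma ptr:
  fixes a b M :: real
  assumes "0 \<le> a" "0 \<le> b" "0 \<le> M"
  shows "(min a M)^2 - (min b M)^2 \<le> min (M^2) (2 * M * \<bar>a - b\<bar>)"
proof -
  have s1: "(min a M)^2 - (min b M)^2 \<le> M^2"
  proof -
    have "(min a M)^2 \<le> M^2" using assms by (intro power_mono) auto
    moreover have "0 \<le> (min b M)^2" by simp
    ultimately show ?thesis by linarith
  qed
  have "(min a M)^2 - (min b M)^2 \<le> \<bar>(min a M)^2 - (min b M)^2\<bar>" by simp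
  also have "\<dots> = \<bar>min a M - min b M\<bar> * \<bar>min a M + min b M\<bar>" by (rule sqdiff)
  also have "\<dots> \<le> \<bar>a - b\<bar> * (2 * M)"
    using assms by (intro mult_mono) (auto simp: min_def abs_if)
  finally have "(min a M)^2 - (min b M)^2 \<le> 2 * M * \<bar>a - b\<bar>" by (simp add: algebra_simps)
  thus ?thesis using s1 by simp
qed

lemma trunc_core:
  fixes \<pi> :: "((real^'n) \<times> (real^'n)) measure" and g1 g2 :: "(real^'n) \<times> (real^'n) \<Rightarrow> real^'n"
    and v :: "real^'n"
  assumes pd1: "is_dist2 p1" and pd2: "is_dist2 p2"
    and v: "norm v = 1"
    and pi: "prob_space \<pi>" "sets \<pi> = sets borel"
    and g1: "g1 \<in> borel_measurable borel" "distr \<pi> borel g1 = p1"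
    and g2: "g2 \<in> borel_measurable borel" "distr \<pi> borel g2 = p2"
    and cst: "(\<integral>\<^sup>+z. ennreal (norm (g1 z - g2 z)) \<partial>\<pi>) \<le> ennreal \<delta>"
    and M: "0 \<le> M" and d: "0 \<le> \<delta>"
  shows "(\<integral>x. \<bar>v \<bullet> x\<bar>^2 \<partial>p1) - (\<integral>x. \<bar>v \<bullet> x\<bar>^2 \<partial>p2)
           \<le> (\<integral>x. \<bar>v \<bullet> x\<bar>^2 - (min \<bar>v \<bullet> x\<bar> M)^2 \<partial>p1) + 2 * M * \<delta>"
proof -
  have MC: "\<And>N. measurable \<pi> N = measurable borel N" by (rule measurable_cong_sets[OF pi(2) refl])
  have fin: "finite_measure \<pi>" using pi(1) by (simp add: prob_space_def)
  have g1pi: "g1 \<in> measurable \<pi> borel" using g1(1) by (simp only: MC)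
  have g2pi: "g2 \<in> measurable \<pi> borel" using g2(1) by (simp only: MC)
  define w1 where "w1 z = \<bar>v \<bullet> g1 z\<bar>" for z
  define w2 where "w2 z = \<bar>v \<bullet> g2 z\<bar>" for z
  have w1m: "w1 \<in> borel_measurable borel" unfolding w1_def using g1(1) by measurable
  have w2m: "w2 \<in> borel_measurable borel" unfolding w2_def using g2(1) by measurable
  have w1p: "w1 \<in> borel_measurable \<pi>" using w1m by (simp only: MC)
  have w2p: "w2 \<in> borel_measurable \<pi>" using w2m by (simp only: MC)
  have w10: "0 \<le> w1 z" for z by (simp add: w1_def)
  have w20: "0 \<le> w2 z" for z by (simp add: w2_def)
  have ig1: "integrable \<pi> (\<lambda>z. norm (g1 z) ^ 2)"
    using pd1 g1(2)[symmetric] g1pi by (simp add: is_dist2_def integrable_distr_eq)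
  have ig2: "integrable \<pi> (\<lambda>z. norm (g2 z) ^ 2)"
    using pd2 g2(2)[symmetric] g2pi by (simp add: is_dist2_def integrable_distr_eq)
  have wle1: "w1 z \<le> norm (g1 z)" for z
    using Cauchy_Schwarz_ineq2[of v "g1 z"] v by (simp add: w1_def)
  have wle2: "w2 z \<le> norm (g2 z)" for z
    using Cauchy_Schwarz_ineq2[of v "g2 z"] v by (simp add: w2_def)
  have iw1s: "integrable \<pi> (\<lambda>z. (w1 z)^2)"
  proof (rule Bochner_Integration.integrable_bound[OF ig1])
    show "(\<lambda>z. (w1 z)^2) \<in> borel_measurable \<pi>" using w1p by measurable
    show "AE z in \<pi>. norm ((w1 z)^2) \<le> norm (norm (g1 z) ^ 2)"
      using wle1 w10 by (intro AE_I2) (simp add: power_mono)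
  qed
  have iw2s: "integrable \<pi> (\<lambda>z. (w2 z)^2)"
  proof (rule Bochner_Integration.integrable_bound[OF ig2])
    show "(\<lambda>z. (w2 z)^2) \<in> borel_measurable \<pi>" using w2p by measurable
    show "AE z in \<pi>. norm ((w2 z)^2) \<le> norm (norm (g2 z) ^ 2)"
      using wle2 w20 by (intro AE_I2) (simp add: power_mono)
  qed
  have imin: "integrable \<pi> (\<lambda>z. (min (w z) M)^2)" if wp: "w \<in> borel_measurable \<pi>" and w0: "\<And>z. 0 \<le> w z" for w
  proof (rule Bochner_Integration.integrable_bound[OF finite_measure.integrable_const[OF fin, of "M^2"]])
    show "(\<lambda>z. (min (w z) M)^2) \<in> borel_measurable \<pi>" using wp by measurable
    show "AE z in \<pi>. norm ((min (w z) M)^2) \<le> norm (M^2)"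
      using w0 M by (intro AE_I2) (simp add: power_mono)
  qed
  have im1: "integrable \<pi> (\<lambda>z. (min (w1 z) M)^2)" by (rule imin[OF w1p w10])
  have im2: "integrable \<pi> (\<lambda>z. (min (w2 z) M)^2)" by (rule imin[OF w2p w20])
  define h where "h z = min (M^2) (2 * M * norm (g1 z - g2 z))" for z
  have hm: "h \<in> borel_measurable \<pi>" unfolding h_def using g1pi g2pi by measurable
  have h0: "0 \<le> h z" for z using M by (simp add: h_def)
  have ih: "integrable \<pi> h"
  proof (rule Bochner_Integration.integrable_bound[OF finite_measure.integrable_const[OF fin, of "M^2"]])
    show "h \<in> borel_measurable \<pi>" by (rule hm)
    show "AE z in \<pi>. norm (h z) \<le> norm (M^2)" using h0 by (intro AE_I2) (simp add: h_def)
  qed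
  have fle: "(min (w1 z) M)^2 - (min (w2 z) M)^2 \<le> h z" for z
  proof -
    have "\<bar>w1 z - w2 z\<bar> \<le> \<bar>v \<bullet> (g1 z - g2 z)\<bar>" unfolding w1_def w2_def inner_diff_right by simp
    also have "\<dots> \<le> norm (g1 z - g2 z)" using Cauchy_Schwarz_ineq2[of v "g1 z - g2 z"] v by simp
    finally have "2 * M * \<bar>w1 z - w2 z\<bar> \<le> 2 * M * norm (g1 z - g2 z)" using M by (intro mult_left_mono) auto
    thus ?thesis using ptr[OF w10 w20 M, of z z] unfolding h_def by linarith
  qed
  have "ennreal (\<integral>z. h z \<partial>\<pi>) = (\<integral>\<^sup>+z. ennreal (h z) \<partial>\<pi>)"
    using nn_integral_eq_integral[OF ih] h0 by simp
  also have "\<dots> \<le> (\<integral>\<^sup>+z. ennreal (2 * M) * ennreal (norm (g1 z - g2 z)) \<partial>\<pi>)"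
    using M by (intro nn_integral_mono) (simp add: h_def ennreal_mult[symmetric] ennreal_leI)
  also have "\<dots> = ennreal (2 * M) * (\<integral>\<^sup>+z. ennreal (norm (g1 z - g2 z)) \<partial>\<pi>)"
    using g1pi g2pi by (intro nn_integral_cmult) measurable
  also have "\<dots> \<le> ennreal (2 * M) * ennreal \<delta>" using cst by (rule mult_left_mono) simp
  also have "\<dots> = ennreal (2 * M * \<delta>)" using M d by (simp add: ennreal_mult)
  finally have hI: "(\<integral>z. h z \<partial>\<pi>) \<le> 2 * M * \<delta>" using M d by (simp add: ennreal_le_iff)
  have fI: "(\<integral>z. (min (w1 z) M)^2 \<partial>\<pi>) - (\<integral>z. (min (w2 z) M)^2 \<partial>\<pi>) \<le> 2 * M * \<delta>"
  proof -
    have "(\<integral>z. (min (w1 z) M)^2 - (min (w2 z) M)^2 \<partial>\<pi>) \<le> (\<integral>z. h z \<partial>\<pi>)"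
      using im1 im2 ih fle by (intro integral_mono) auto
    thus ?thesis using hI Bochner_Integration.integral_diff[OF im1 im2] by simp
  qed
  have A2ge: "(\<integral>z. (min (w2 z) M)^2 \<partial>\<pi>) \<le> (\<integral>z. (w2 z)^2 \<partial>\<pi>)"
    using im2 iw2s w20 M by (intro integral_mono) (auto intro: power_mono)
  have sqm: "(\<lambda>x::real^'n. \<bar>v \<bullet> x\<bar>^2) \<in> borel_measurable borel" by measurable
  have tm: "(\<lambda>x::real^'n. \<bar>v \<bullet> x\<bar>^2 - (min \<bar>v \<bullet> x\<bar> M)^2) \<in> borel_measurable borel" by measurable
  have A1e: "(\<integral>x. \<bar>v \<bullet> x\<bar>^2 \<partial>p1) = (\<integral>z. (w1 z)^2 \<partial>\<pi>)"
    unfolding w1_def g1(2)[symmetric] using integral_distr[OF g1pi sqm] by simp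
  have A2e: "(\<integral>x. \<bar>v \<bullet> x\<bar>^2 \<partial>p2) = (\<integral>z. (w2 z)^2 \<partial>\<pi>)"
    unfolding w2_def g2(2)[symmetric] using integral_distr[OF g2pi sqm] by simp
  have Te: "(\<integral>x. \<bar>v \<bullet> x\<bar>^2 - (min \<bar>v \<bullet> x\<bar> M)^2 \<partial>p1) = (\<integral>z. (w1 z)^2 \<partial>\<pi>) - (\<integral>z. (min (w1 z) M)^2 \<partial>\<pi>)"
  proof -
    have "(\<integral>x. \<bar>v \<bullet> x\<bar>^2 - (min \<bar>v \<bullet> x\<bar> M)^2 \<partial>p1) = (\<integral>z. (w1 z)^2 - (min (w1 z) M)^2 \<partial>\<pi>)"
      unfolding w1_def g1(2)[symmetric] using integral_distr[OF g1pi tm] by simp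
    also have "\<dots> = (\<integral>z. (w1 z)^2 \<partial>\<pi>) - (\<integral>z. (min (w1 z) M)^2 \<partial>\<pi>)"
      by (rule Bochner_Integration.integral_diff[OF iw1s im1])
    finally show ?thesis .
  qed
  show ?thesis unfolding A1e A2e Te using fI A2ge by linarith
qed


lemma tail_small:
  fixes p :: "(real^'n) measure" and v :: "real^'n"
  assumes pd: "is_dist2 p" and v: "norm v = 1" and g: "0 < \<gamma>"
  shows "\<exists>M\<ge>0. (\<integral>x. \<bar>v \<bullet> x\<bar>^2 - (min \<bar>v \<bullet> x\<bar> M)^2 \<partial>p) < \<gamma>"
proof -
  have sb: "sets p = sets borel" and ip: "integrable p (\<lambda>x. norm x ^ 2)" using pd by (auto simp: is_dist2_def)
  have MC: "\<And>N. measurable p N = measurable borel N" by (rule measurable_cong_sets[OF sb refl])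
  define s where "s n x = \<bar>v \<bullet> x\<bar>^2 - (min \<bar>v \<bullet> x\<bar> (real n))^2" for n :: nat and x :: "real^'n"
  have sm: "s n \<in> borel_measurable p" for n
  proof -
    have "s n \<in> borel_measurable borel" unfolding s_def by measurable
    thus ?thesis by (simp only: MC)
  qed
  have iw: "integrable p (\<lambda>x. \<bar>v \<bullet> x\<bar>^2)"
  proof (rule Bochner_Integration.integrable_bound[OF ip])
    have "(\<lambda>x::real^'n. \<bar>v \<bullet> x\<bar>^2) \<in> borel_measurable borel" by measurable
    thus "(\<lambda>x. \<bar>v \<bullet> x\<bar>^2) \<in> borel_measurable p" by (simp only: MC)
    show "AE x in p. norm (\<bar>v \<bullet> x\<bar>^2) \<le> norm (norm x ^ 2)"
    proof (rule AE_I2)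
      fix x :: "real^'n"
      have "\<bar>v \<bullet> x\<bar> \<le> norm x" using Cauchy_Schwarz_ineq2[of v x] v by simp
      hence "\<bar>v \<bullet> x\<bar>^2 \<le> (norm x)^2" by (intro power_mono) auto
      thus "norm (\<bar>v \<bullet> x\<bar>^2) \<le> norm (norm x ^ 2)" by simp
    qed
  qed
  have lim: "(\<lambda>n. \<integral>x. s n x \<partial>p) \<longlonglongrightarrow> (\<integral>x. 0 \<partial>p)"
  proof (rule integral_dominated_convergence[where w="\<lambda>x. \<bar>v \<bullet> x\<bar>^2"])
    show "(\<lambda>x. 0::real) \<in> borel_measurable p" by simp
    show "s n \<in> borel_measurable p" for n by (rule sm)
    show "integrable p (\<lambda>x. \<bar>v \<bullet> x\<bar>^2)" by (rule iw)
    show "AE x in p. (\<lambda>n. s n x) \<longlonglongrightarrow> 0"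
    proof (rule AE_I2)
      fix x :: "real^'n"
      have "eventually (\<lambda>n. s n x = 0) sequentially"
        unfolding eventually_sequentially
      proof (intro exI allI impI)
        fix n assume "nat \<lceil>\<bar>v \<bullet> x\<bar>\<rceil> \<le> n"
        hence "\<bar>v \<bullet> x\<bar> \<le> real n"
          by (metis le_trans nat_ceiling_le_eq not_le of_nat_le_iff order_less_imp_le real_nat_ceiling_ge)
        thus "s n x = 0" by (simp add: s_def)
      qed
      thus "(\<lambda>n. s n x) \<longlonglongrightarrow> 0" by (rule tendsto_eventually)
    qed
    show "AE x in p. norm (s n x) \<le> \<bar>v \<bullet> x\<bar>^2" for n
    proof (rule AE_I2)
      fix x :: "real^'n"
      have a: "(min \<bar>v \<bullet> x\<bar> (real n))^2 \<le> \<bar>v \<bullet> x\<bar>^2" by (intro power_mono) auto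
      have "0 \<le> (min \<bar>v \<bullet> x\<bar> (real n))^2" by simp
      thus "norm (s n x) \<le> \<bar>v \<bullet> x\<bar>^2" using a by (simp add: s_def)
    qed
  qed
  hence "eventually (\<lambda>n. (\<integral>x. s n x \<partial>p) < \<gamma>) sequentially"
    using g by (intro order_tendstoD(2)) auto
  then obtain N where "\<forall>n\<ge>N. (\<integral>x. s n x \<partial>p) < \<gamma>" unfolding eventually_sequentially by blast
  hence "(\<integral>x. s N x \<partial>p) < \<gamma>" by simp
  thus ?thesis unfolding s_def by (intro exI[of _ "real N"]) auto
qed

lemma dir_zero_one:
  fixes v :: "real^'n" and g1 g2 :: "(real^'n) \<times> (real^'n) \<Rightarrow> real^'n"
  assumes pd1: "is_dist2 p1" and pd2: "is_dist2 p2" and v: "norm v = 1"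
    and W: "\<And>\<delta>. 0 < \<delta> \<Longrightarrow> \<exists>\<pi>. prob_space \<pi> \<and> sets \<pi> = sets borel \<and> distr \<pi> borel g1 = p1 \<and> distr \<pi> borel g2 = p2 \<and>
              (\<integral>\<^sup>+z. ennreal (norm (g1 z - g2 z)) \<partial>\<pi>) \<le> ennreal \<delta>"
    and g1: "g1 \<in> borel_measurable borel" and g2: "g2 \<in> borel_measurable borel"
  shows "(\<integral>x. \<bar>v \<bullet> x\<bar>^2 \<partial>p1) \<le> (\<integral>x. \<bar>v \<bullet> x\<bar>^2 \<partial>p2)"
proof (rule field_le_epsilon)
  fix \<gamma> :: real assume g: "0 < \<gamma>"
  obtain M where M: "0 \<le> M" "(\<integral>x. \<bar>v \<bullet> x\<bar>^2 - (min \<bar>v \<bullet> x\<bar> M)^2 \<partial>p1) < \<gamma> / 2"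
    using tail_small[OF pd1 v, of "\<gamma>/2"] g by auto
  define \<delta> where "\<delta> = \<gamma> / (4 * M + 4)"
  have d0: "0 < \<delta>" using g M by (simp add: \<delta>_def)
  have dM: "2 * M * \<delta> \<le> \<gamma> / 2"
  proof -
    have "2 * M * \<delta> = \<gamma> / 2 * (4 * M / (4 * M + 4))" using M by (simp add: \<delta>_def field_simps)
    also have "\<dots> \<le> \<gamma> / 2 * 1" using g M by (intro mult_left_mono) auto
    finally show ?thesis by simp
  qed
  obtain \<pi> where pi: "prob_space \<pi>" "sets \<pi> = sets borel" "distr \<pi> borel g1 = p1" "distr \<pi> borel g2 = p2"
      "(\<integral>\<^sup>+z. ennreal (norm (g1 z - g2 z)) \<partial>\<pi>) \<le> ennreal \<delta>"
    using W[OF d0] by blast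
  have "(\<integral>x. \<bar>v \<bullet> x\<bar>^2 \<partial>p1) - (\<integral>x. \<bar>v \<bullet> x\<bar>^2 \<partial>p2)
           \<le> (\<integral>x. \<bar>v \<bullet> x\<bar>^2 - (min \<bar>v \<bullet> x\<bar> M)^2 \<partial>p1) + 2 * M * \<delta>"
    by (rule trunc_core[OF pd1 pd2 v pi(1,2) g1 pi(3) g2 pi(4) pi(5) M(1) less_imp_le[OF d0]])
  thus "(\<integral>x. \<bar>v \<bullet> x\<bar>^2 \<partial>p1) \<le> (\<integral>x. \<bar>v \<bullet> x\<bar>^2 \<partial>p2) + \<gamma>" using M(2) dM by linarith
qed

lemma dir_zero:
  fixes v :: "real^'n"
  assumes pd1: "is_dist2 p1" and pd2: "is_dist2 p2" and v: "norm v = 1"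
    and W: "W1 p1 p2 \<le> ennreal 0"
  shows "(\<integral>x. \<bar>v \<bullet> x\<bar>^2 \<partial>p1) = (\<integral>x. \<bar>v \<bullet> x\<bar>^2 \<partial>p2)"
proof -
  have ex: "\<exists>\<pi>. coupling \<pi> p1 p2 \<and> (\<integral>\<^sup>+ z. ennreal (norm (fst z - snd z)) \<partial>\<pi>) \<le> ennreal \<delta>" if "0 < \<delta>" for \<delta>
    using coupling_exists[OF W that] by simp
  have a: "(\<integral>x. \<bar>v \<bullet> x\<bar>^2 \<partial>p1) \<le> (\<integral>x. \<bar>v \<bullet> x\<bar>^2 \<partial>p2)"
  proof (rule dir_zero_one[OF pd1 pd2 v _ fst_borel snd_borel])
    fix \<delta> :: real assume "0 < \<delta>"
    then obtain \<pi> where "coupling \<pi> p1 p2" "(\<integral>\<^sup>+ z. ennreal (norm (fst z - snd z)) \<partial>\<pi>) \<le> ennreal \<delta>"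
      using ex by blast
    thus "\<exists>\<pi>. prob_space \<pi> \<and> sets \<pi> = sets borel \<and> distr \<pi> borel fst = p1 \<and> distr \<pi> borel snd = p2 \<and>
              (\<integral>\<^sup>+z. ennreal (norm (fst z - snd z)) \<partial>\<pi>) \<le> ennreal \<delta>"
      by (auto simp: coupling_def)
  qed
  have b: "(\<integral>x. \<bar>v \<bullet> x\<bar>^2 \<partial>p2) \<le> (\<integral>x. \<bar>v \<bullet> x\<bar>^2 \<partial>p1)"
  proof (rule dir_zero_one[OF pd2 pd1 v _ snd_borel fst_borel])
    fix \<delta> :: real assume "0 < \<delta>"
    then obtain \<pi> where "coupling \<pi> p1 p2" "(\<integral>\<^sup>+ z. ennreal (norm (fst z - snd z)) \<partial>\<pi>) \<le> ennreal \<delta>"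
      using ex by blast
    thus "\<exists>\<pi>. prob_space \<pi> \<and> sets \<pi> = sets borel \<and> distr \<pi> borel snd = p2 \<and> distr \<pi> borel fst = p1 \<and>
              (\<integral>\<^sup>+z. ennreal (norm (snd z - fst z)) \<partial>\<pi>) \<le> ennreal \<delta>"
      by (auto simp: coupling_def norm_minus_commute)
  qed
  show ?thesis using a b by simp
qed

theorem theorem4p3:
  fixes \<rho> \<eta> \<epsilon> :: real
  assumes "\<rho> \<ge> 0" and "\<eta> \<ge> 0" and "2 * \<epsilon> \<le> \<eta>"
  shows "\<forall>p1 p2 :: (real^'n) measure. p1 \<in> G_sec \<rho> \<eta> \<longrightarrow> p2 \<in> G_sec \<rho> \<eta> \<longrightarrow>
           W1 p1 p2 \<le> ennreal (2 * \<epsilon>) \<longrightarrow>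
           onorm (\<lambda>x. (second_moment p1 - second_moment p2) *v x) \<le> 2 * \<rho>"
proof (intro allI impI)
  fix p1 p2 :: "(real^'n) measure"
  assume p1G: "p1 \<in> G_sec \<rho> \<eta>" and p2G: "p2 \<in> G_sec \<rho> \<eta>" and W: "W1 p1 p2 \<le> ennreal (2 * \<epsilon>)"
  have pd1: "is_dist2 p1" and pd2: "is_dist2 p2" using p1G p2G by (auto simp: G_sec_def)
  have W': "W1 p1 p2 \<le> ennreal \<eta>" using W assms(3) order.trans ennreal_leI by blast
  show "onorm (\<lambda>x. (second_moment p1 - second_moment p2) *v x) \<le> 2 * \<rho>"
  proof (rule sym_onorm[OF transpose_sm_diff])
    fix v :: "real^'n" assume v: "norm v = 1"
    have e: "v \<bullet> ((second_moment p1 - second_moment p2) *v v) = (\<integral>x. \<bar>v \<bullet> x\<bar>^2 \<partial>p1) - (\<integral>x. \<bar>v \<bullet> x\<bar>^2 \<partial>p2)"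
      by (simp add: matrix_vector_mult_diff_rdistrib inner_diff_right quad_second_moment[OF pd1] quad_second_moment[OF pd2])
    show "\<bar>v \<bullet> ((second_moment p1 - second_moment p2) *v v)\<bar> \<le> 2 * \<rho>"
    proof (cases "\<eta> = 0")
      case True
      hence "(\<integral>x. \<bar>v \<bullet> x\<bar>^2 \<partial>p1) = (\<integral>x. \<bar>v \<bullet> x\<bar>^2 \<partial>p2)" using dir_zero[OF pd1 pd2 v] W' by simp
      thus ?thesis using e assms(1) by simp
    next
      case False
      hence "0 < \<eta>" using assms(2) by simp
      thus ?thesis using e dir_pos[OF p1G p2G v W'] by simp
    qed
  qed
qed


end
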